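(* Under complete randomization, suppose Assumption 1 holds and Assumptions 2 and 3 hold with order $k<T$. Let $\vec z'\in\{A,B\}^T$ and $t\in\{1,\dots,T\}$. Then $\bar Y_t(\vec z')$ is unbiasedly estimable if either (a) the hypothesis of Proposition S2 holds, i.e. ($t\le k$ and some $\vec z\in\mathcal{S}^{\mathrm{obs}}$ has $\vec z_{[1,t]}=\vec z'_{[1,t]}$) or ($t>k$ and some $\vec z\in\mathcal{S}^{\mathrm{obs}}$ has $\vec z_{[t-k+1,t]}=\vec z'_{[t-k+1,t]}$); or (b) $t\ge k$ and there exist $t'\ge k$, $t'\neq t$, and sequences $\vec z_1,\vec z_2,\vec z_3\in\{A,B\}^T$ with $\vec z_{1,[t'-k+1,t']}=\vec z'_{[t-k+1,t]}$ and $\vec z_{2,[t-k+1,t]}=\vec z_{3,[t'-k+1,t']}$, such that each of $\bar Y_{t'}(\vec z_1)$, $\bar Y_t(\vec z_2)$, $\bar Y_{t'}(\vec z_3)$ is unbiasedly estimable.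
   Context: Setup: $N$ units, treatments $A,B$, $T$ periods; sequences $\vec z\in\{A,B\}^T$, $\vec z_{[t_1,t_2]}=z_{t_1}\cdots z_{t_2}$. $\mathcal{S}^{\mathrm{obs}}$ implemented sequences; complete randomization with fixed positive group sizes $N_{\vec z}$; fixed potential outcomes $Y_{it}(\vec z)$; observed $Y_{it}=Y_{it}(\vec Z_i)$; randomness only from assignment. $\bar Y_t(\vec z)=N^{-1}\sum_iY_{it}(\vec z)$, $\widehat Y_t(\vec z)=N_{\vec z}^{-1}\sum_iY_{it}\mathbf1(\vec Z_i=\vec z)$. Assumption 1: $Y_{it}(\vec z)=Y_{it}(\vec z')$ whenever $\vec z_{[1,t]}=\vec z'_{[1,t]}$. Assumption 2 (order $k$): $Y_{it}(\vec z)=Y_{it}(\vec z')$ whenever $\vec z_{[\max(1,t-k+1),t]}=\vec z'_{[\max(1,t-k+1),t]}$; for $t\ge k$ write $Y_{it}(a)$, $a\in\{A,B\}^k$, for the common value over sequences with $\vec z_{[t-k+1,t]}=a$. Assumption 3 (order $k$): for all $a,b\in\{A,B\}^k$ and $t'>t\ge k$, $Y_{it}(a)-Y_{it}(b)=Y_{it'}(a)-Y_{it'}(b)$. A quantity is unbiasedly estimable if there is an estimator $\sum_{s}\sum_{\vec z\in\mathcal{S}^{\mathrm{obs}}}\tilde w_s(\vec z)\widehat Y_s(\vec z)$ with non-random weights whose expectation equals it for every finite population satisfying the assumptions. *)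

theory Defs
  imports Complex_Main "HOL-Library.FuncSet"
begin

datatype trt = A | B

text \<open>Treatment sequences in {A,B}^T are lists of length T; period j (1-based)
  is the list entry at index j-1.  Units are 0..<N, periods 1..T.
  Potential outcomes: Y i t z.\<close>

definition seqs :: "nat \<Rightarrow> trt list set" where
  "seqs T = {z. length z = T}"

definition agree :: "trt list \<Rightarrow> trt list \<Rightarrow> nat \<Rightarrow> nat \<Rightarrow> bool" where
  "agree z z' a b \<longleftrightarrow> (\<forall>j. a \<le> j \<and> j \<le> b \<longrightarrow> z ! (j - 1) = z' ! (j - 1))"

text \<open>window z_[t-k+1,t] as a word in {A,B}^k (for k \<le> t \<le> length z)\<close>
definition win :: "nat \<Rightarrow> trt list \<Rightarrow> nat \<Rightarrow> trt list" where
  "win k z t = take k (drop (t - k) z)"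

definition assump1 :: "nat \<Rightarrow> nat \<Rightarrow> (nat \<Rightarrow> nat \<Rightarrow> trt list \<Rightarrow> real) \<Rightarrow> bool" where
  "assump1 N T Y \<longleftrightarrow> (\<forall>i<N. \<forall>t\<in>{1..T}. \<forall>z\<in>seqs T. \<forall>z'\<in>seqs T.
      agree z z' 1 t \<longrightarrow> Y i t z = Y i t z')"

definition assump2 :: "nat \<Rightarrow> nat \<Rightarrow> nat \<Rightarrow> (nat \<Rightarrow> nat \<Rightarrow> trt list \<Rightarrow> real) \<Rightarrow> bool" where
  "assump2 N T k Y \<longleftrightarrow> (\<forall>i<N. \<forall>t\<in>{1..T}. \<forall>z\<in>seqs T. \<forall>z'\<in>seqs T.
      agree z z' (max 1 (t + 1 - k)) t \<longrightarrow> Y i t z = Y i t z')"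

text \<open>Assumption 3: Y_it(a) - Y_it(b) = Y_it'(a) - Y_it'(b); Y_it(a) is the common value
  of Y i t z over sequences z whose window ending at t is a.\<close>
definition assump3 :: "nat \<Rightarrow> nat \<Rightarrow> nat \<Rightarrow> (nat \<Rightarrow> nat \<Rightarrow> trt list \<Rightarrow> real) \<Rightarrow> bool" where
  "assump3 N T k Y \<longleftrightarrow> (\<forall>a b. length a = k \<longrightarrow> length b = k \<longrightarrow>
     (\<forall>t t'. k \<le> t \<longrightarrow> t < t' \<longrightarrow> t' \<le> T \<longrightarrow>
      (\<forall>i<N. \<forall>z1\<in>seqs T. \<forall>z2\<in>seqs T. \<forall>z3\<in>seqs T. \<forall>z4\<in>seqs T.
         win k z1 t = a \<longrightarrow> win k z2 t = b \<longrightarrow> win k z3 t' = a \<longrightarrow> win k z4 t' = b \<longrightarrow>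
         Y i t z1 - Y i t z2 = Y i t' z3 - Y i t' z4)))"

definition valid_pop :: "nat \<Rightarrow> nat \<Rightarrow> nat \<Rightarrow> (nat \<Rightarrow> nat \<Rightarrow> trt list \<Rightarrow> real) \<Rightarrow> bool" where
  "valid_pop N T k Y \<longleftrightarrow> assump1 N T Y \<and> assump2 N T k Y \<and> assump3 N T k Y"

text \<open>Complete randomization: all assignments of units to implemented sequences S with
  group sizes Nz, each equally likely.\<close>
definition assignments :: "nat \<Rightarrow> trt list set \<Rightarrow> (trt list \<Rightarrow> nat) \<Rightarrow> (nat \<Rightarrow> trt list) set" where
  "assignments N S Nz = {Z \<in> {0..<N} \<rightarrow>\<^sub>E S. \<forall>z\<in>S. card {i. i < N \<and> Z i = z} = Nz z}"

definition Ybar :: "nat \<Rightarrow> (nat \<Rightarrow> nat \<Rightarrow> trt list \<Rightarrow> real) \<Rightarrow> nat \<Rightarrow> trt list \<Rightarrow> real" where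
  "Ybar N Y t z = (\<Sum>i<N. Y i t z) / real N"

definition Yhat :: "nat \<Rightarrow> (trt list \<Rightarrow> nat) \<Rightarrow> (nat \<Rightarrow> nat \<Rightarrow> trt list \<Rightarrow> real)
    \<Rightarrow> (nat \<Rightarrow> trt list) \<Rightarrow> nat \<Rightarrow> trt list \<Rightarrow> real" where
  "Yhat N Nz Y Z t z = (\<Sum>i<N. if Z i = z then Y i t (Z i) else 0) / real (Nz z)"

definition expect :: "nat \<Rightarrow> trt list set \<Rightarrow> (trt list \<Rightarrow> nat) \<Rightarrow> ((nat \<Rightarrow> trt list) \<Rightarrow> real) \<Rightarrow> real" where
  "expect N S Nz f = (\<Sum>Z\<in>assignments N S Nz. f Z) / real (card (assignments N S Nz))"

definition estimable :: "nat \<Rightarrow> nat \<Rightarrow> nat \<Rightarrow> trt list set \<Rightarrow> (trt list \<Rightarrow> nat)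
    \<Rightarrow> ((nat \<Rightarrow> nat \<Rightarrow> trt list \<Rightarrow> real) \<Rightarrow> real) \<Rightarrow> bool" where
  "estimable N T k S Nz Q \<longleftrightarrow> (\<exists>w :: nat \<Rightarrow> trt list \<Rightarrow> real.
     \<forall>Y. valid_pop N T k Y \<longrightarrow>
       expect N S Nz (\<lambda>Z. \<Sum>s\<in>{1..T}. \<Sum>z\<in>S. w s z * Yhat N Nz Y Z s z) = Q Y)"

end

theory Submission
  imports Defs
begin

lemma finite_seqs: "finite (seqs T)"
proof -
  have U: "(UNIV :: trt set) = {A, B}" by (auto intro: trt.exhaust)
  have "seqs T \<subseteq> {xs. set xs \<subseteq> UNIV \<and> length xs = T}" by (auto simp: seqs_def)
  moreover have "finite {xs. set xs \<subseteq> (UNIV :: trt set) \<and> length xs = T}"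
    by (rule finite_lists_length_eq) (simp add: U)
  ultimately show ?thesis by (rule finite_subset)
qed

lemma assign_exists:
  assumes "finite S"
  shows "\<exists>Z. Z \<in> {0..<sum Nz S} \<rightarrow>\<^sub>E S \<and> (\<forall>z\<in>S. card {i. i < sum Nz S \<and> Z i = z} = Nz z)"
  using assms
proof (induction S rule: finite_induct)
  case empty
  show ?case by (intro exI[of _ "\<lambda>_. undefined"]) auto
next
  case (insert x F)
  then obtain Z' where Z': "Z' \<in> {0..<sum Nz F} \<rightarrow>\<^sub>E F"
    "\<forall>z\<in>F. card {i. i < sum Nz F \<and> Z' i = z} = Nz z" by blast
  define M where "M = sum Nz F"
  define Z where "Z = (\<lambda>i. if i < M then Z' i else if i < M + Nz x then x else undefined)"
  have sm: "sum Nz (insert x F) = M + Nz x" using insert by (simp add: M_def)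
  show ?case
  proof (intro exI[of _ Z] conjI ballI)
    show "Z \<in> {0..<sum Nz (insert x F)} \<rightarrow>\<^sub>E insert x F"
      using Z'(1) unfolding sm by (auto simp: Z_def M_def PiE_def Pi_def extensional_def)
    fix z assume z: "z \<in> insert x F"
    show "card {i. i < sum Nz (insert x F) \<and> Z i = z} = Nz z"
    proof (cases "z = x")
      case True
      have "{i. i < sum Nz (insert x F) \<and> Z i = z} = {M..<M + Nz x}"
        using Z'(1) insert.hyps(2) True by (auto simp: sm Z_def M_def PiE_def Pi_def) (meson not_le)
      then show ?thesis using True by simp
    next
      case False
      then have zF: "z \<in> F" using z by auto
      have "{i. i < sum Nz (insert x F) \<and> Z i = z} = {i. i < M \<and> Z' i = z}"
        using False by (auto simp: sm Z_def)
      then show ?thesis using Z'(2) zF by (simp add: M_def)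
    qed
  qed
qed

lemma assign_sym:
  assumes ij: "i < N" "j < N"
  shows "card {Z \<in> assignments N S Nz. Z i = z} = card {Z \<in> assignments N S Nz. Z j = z}"
proof -
  define \<sigma> where "\<sigma> = (\<lambda>l::nat. if l = i then j else if l = j then i else l)"
  have ss: "\<sigma> (\<sigma> l) = l" for l by (auto simp: \<sigma>_def)
  have si: "\<sigma> i = j" and sj: "\<sigma> j = i" by (auto simp: \<sigma>_def)
  have sN: "l < N \<Longrightarrow> \<sigma> l < N" for l using ij by (auto simp: \<sigma>_def)
  have sN2: "\<not> l < N \<Longrightarrow> \<sigma> l = l" for l using ij by (auto simp: \<sigma>_def)
  have closed: "Z \<circ> \<sigma> \<in> assignments N S Nz" if Z: "Z \<in> assignments N S Nz" for Z
  proof -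
    have Zp: "Z \<in> {0..<N} \<rightarrow>\<^sub>E S" and Zc: "\<forall>z\<in>S. card {i. i < N \<and> Z i = z} = Nz z"
      using Z by (auto simp: assignments_def)
    have "Z \<circ> \<sigma> \<in> {0..<N} \<rightarrow>\<^sub>E S"
      using Zp sN sN2 by (auto simp: PiE_def Pi_def extensional_def)
    moreover have "card {l. l < N \<and> (Z \<circ> \<sigma>) l = z} = Nz z" if "z \<in> S" for z
    proof -
      have "bij_betw \<sigma> {l. l < N \<and> (Z \<circ> \<sigma>) l = z} {l. l < N \<and> Z l = z}"
        by (rule bij_betw_byWitness[where f' = \<sigma>]) (auto simp: ss sN intro: sN)
      then have "card {l. l < N \<and> (Z \<circ> \<sigma>) l = z} = card {l. l < N \<and> Z l = z}"
        by (rule bij_betw_same_card)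
      then show ?thesis using Zc that by simp
    qed
    ultimately show ?thesis by (simp add: assignments_def)
  qed
  have "bij_betw (\<lambda>Z. Z \<circ> \<sigma>) {Z \<in> assignments N S Nz. Z i = z} {Z \<in> assignments N S Nz. Z j = z}"
    by (rule bij_betw_byWitness[where f' = "\<lambda>Z. Z \<circ> \<sigma>"])
       (auto simp: ss closed si sj)
  then show ?thesis by (rule bij_betw_same_card)
qed


lemma finite_assign:
  assumes "finite S" shows "finite (assignments N S Nz)"
proof -
  have "assignments N S Nz \<subseteq> {0..<N} \<rightarrow>\<^sub>E S" by (auto simp: assignments_def)
  moreover have "finite ({0..<N} \<rightarrow>\<^sub>E S)" using assms by (intro finite_PiE) auto
  ultimately show ?thesis by (rule finite_subset)
qed

lemma assign_nonempty:
  assumes "finite S" "(\<Sum>z\<in>S. Nz z) = N"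
  shows "assignments N S Nz \<noteq> {}"
  using assign_exists[OF assms(1), of Nz] assms(2) by (auto simp: assignments_def)

lemma card_filter_sum: "finite U \<Longrightarrow> card {x \<in> U. P x} = (\<Sum>x\<in>U. if P x then 1 else (0::nat))"
  using sum.inter_filter[of U "\<lambda>_. (1::nat)" P] by simp

lemma prob_eq:
  assumes fin: "finite S" and sumN: "(\<Sum>z\<in>S. Nz z) = N" and z0: "z0 \<in> S" and i: "i < N"
  shows "real (card {Z \<in> assignments N S Nz. Z i = z0}) * real N
       = real (card (assignments N S Nz)) * real (Nz z0)"
proof -
  let ?G = "assignments N S Nz"
  have fG: "finite ?G" using finite_assign[OF fin] .
  have "(\<Sum>Z\<in>?G. card {l. l < N \<and> Z l = z0}) = (\<Sum>Z\<in>?G. Nz z0)"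
    using z0 by (intro sum.cong) (auto simp: assignments_def)
  also have "\<dots> = card ?G * Nz z0" by simp
  finally have e1: "(\<Sum>Z\<in>?G. card {l. l < N \<and> Z l = z0}) = card ?G * Nz z0" .
  have "(\<Sum>Z\<in>?G. card {l. l < N \<and> Z l = z0})
      = (\<Sum>Z\<in>?G. \<Sum>l<N. if Z l = z0 then 1 else 0)"
  proof (intro sum.cong refl)
    fix Z
    have "{l. l < N \<and> Z l = z0} = {l \<in> {..<N}. Z l = z0}" by auto
    then show "card {l. l < N \<and> Z l = z0} = (\<Sum>l<N. if Z l = z0 then 1 else 0)"
      using card_filter_sum[of "{..<N}" "\<lambda>l. Z l = z0"] by simp
  qed
  also have "\<dots> = (\<Sum>l<N. \<Sum>Z\<in>?G. if Z l = z0 then 1 else 0)" by (rule sum.swap)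
  also have "\<dots> = (\<Sum>l<N. card {Z \<in> ?G. Z l = z0})"
    using card_filter_sum[OF fG] by simp
  also have "\<dots> = (\<Sum>l<N. card {Z \<in> ?G. Z i = z0})"
    using assign_sym[OF _ i] by (intro sum.cong) auto
  also have "\<dots> = N * card {Z \<in> ?G. Z i = z0}" by simp
  finally have "N * card {Z \<in> ?G. Z i = z0} = card ?G * Nz z0" using e1 by simp
  then have "real (N * card {Z \<in> ?G. Z i = z0}) = real (card ?G * Nz z0)" by simp
  then show ?thesis by (simp add: mult.commute)
qed

lemma aux_field: "(g::real) \<noteq> 0 \<Longrightarrow> n \<noteq> 0 \<Longrightarrow> m \<noteq> 0 \<Longrightarrow> s * (g * n / m) / n / g = s / m"
  by (simp add: field_simps)

lemma expect_Yhat: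
  assumes fin: "finite S" and sumN: "(\<Sum>z\<in>S. Nz z) = N" and z0: "z0 \<in> S"
    and pos: "Nz z0 > 0"
  shows "expect N S Nz (\<lambda>Z. Yhat N Nz Y Z t z0) = Ybar N Y t z0"
proof -
  let ?G = "assignments N S Nz"
  have fG: "finite ?G" using finite_assign[OF fin] .
  have Gpos: "card ?G > 0" using assign_nonempty[OF fin sumN] fG by (simp add: card_gt_0_iff)
  have Npos: "N > 0"
  proof -
    have "Nz z0 \<le> N" using member_le_sum[OF z0 _ fin, of Nz] sumN by simp
    then show ?thesis using pos by simp
  qed
  have "(\<Sum>Z\<in>?G. Yhat N Nz Y Z t z0)
      = (\<Sum>Z\<in>?G. \<Sum>i<N. if Z i = z0 then Y i t z0 else 0) / real (Nz z0)"
    unfolding Yhat_def sum_divide_distrib[symmetric]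
    by (intro sum.cong refl arg_cong2[where f="(/)"]) auto
  also have "(\<Sum>Z\<in>?G. \<Sum>i<N. if Z i = z0 then Y i t z0 else 0)
      = (\<Sum>i<N. \<Sum>Z\<in>?G. if Z i = z0 then Y i t z0 else 0)" by (rule sum.swap)
  also have "\<dots> = (\<Sum>i<N. Y i t z0 * real (card {Z \<in> ?G. Z i = z0}))"
    using fG by (simp add: sum.inter_filter[symmetric] mult.commute)
  also have "\<dots> = (\<Sum>i<N. Y i t z0 * (real (card ?G) * real (Nz z0) / real N))"
  proof (intro sum.cong refl)
    fix i assume "i \<in> {..<N}"
    then have "real (card {Z \<in> ?G. Z i = z0}) = real (card ?G) * real (Nz z0) / real N"
      using prob_eq[OF fin sumN z0, of i] Npos by (simp add: field_simps)
    then show "Y i t z0 * real (card {Z \<in> ?G. Z i = z0})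
       = Y i t z0 * (real (card ?G) * real (Nz z0) / real N)" by simp
  qed
  also have "\<dots> = (\<Sum>i<N. Y i t z0) * (real (card ?G) * real (Nz z0) / real N)"
    by (rule sum_distrib_right[symmetric])
  finally have "(\<Sum>Z\<in>?G. Yhat N Nz Y Z t z0)
     = (\<Sum>i<N. Y i t z0) * (real (card ?G) * real (Nz z0) / real N) / real (Nz z0)" .
  then show ?thesis using Gpos pos Npos
    unfolding expect_def Ybar_def by (simp add: aux_field)
qed

lemma double_sum_delta:
  fixes T t :: nat
  assumes "finite S" "z0 \<in> S" "t \<in> {1..T}"
  shows "(\<Sum>s\<in>{1..T}. \<Sum>z\<in>S. (if s = t \<and> z = z0 then 1 else 0) * X s z) = (X t z0 :: real)"
proof -
  have "(\<Sum>s\<in>{1..T}. \<Sum>z\<in>S. (if s = t \<and> z = z0 then 1 else 0) * X s z)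
      = (\<Sum>s\<in>{1..T}. if s = t then X s z0 else 0)"
  proof -
    have r: "\<And>s z. (if s = t \<and> z = z0 then 1 else 0) * X s z
       = (if z0 = z then (if s = t then X s z0 else 0) else (0::real))" by auto
    show ?thesis unfolding r using assms(1,2) by (simp add: sum.delta)
  qed
  also have "\<dots> = (if t \<in> {1..T} then X t z0 else 0)" by (rule sum.delta) simp
  also have "\<dots> = X t z0" using assms(3) by simp
  finally show ?thesis .
qed

lemma est_direct:
  assumes fin: "finite S" and sumN: "(\<Sum>z\<in>S. Nz z) = N" and z0: "z0 \<in> S"
    and pos: "Nz z0 > 0" and t: "t \<in> {1..T}"
  shows "\<forall>Y. expect N S Nz (\<lambda>Z. \<Sum>s\<in>{1..T}. \<Sum>z\<in>S.
            (if s = t \<and> z = z0 then 1 else 0) * Yhat N Nz Y Z s z) = Ybar N Y t z0"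
proof
  fix Y
  have "(\<lambda>Z. \<Sum>s\<in>{1..T}. \<Sum>z\<in>S. (if s = t \<and> z = z0 then 1 else 0) * Yhat N Nz Y Z s z)
     = (\<lambda>Z. Yhat N Nz Y Z t z0)"
  proof
    fix Z show "(\<Sum>s\<in>{1..T}. \<Sum>z\<in>S. (if s = t \<and> z = z0 then 1 else 0) * Yhat N Nz Y Z s z)
       = Yhat N Nz Y Z t z0"
      by (rule double_sum_delta[OF fin z0 t, of "\<lambda>s z. Yhat N Nz Y Z s z"])
  qed
  then show "expect N S Nz (\<lambda>Z. \<Sum>s\<in>{1..T}. \<Sum>z\<in>S.
            (if s = t \<and> z = z0 then 1 else 0) * Yhat N Nz Y Z s z) = Ybar N Y t z0"
    using expect_Yhat[OF fin sumN z0 pos] by simp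
qed

lemma expect_lin:
  "expect N S Nz (\<lambda>Z. f Z + g Z - h Z) = expect N S Nz f + expect N S Nz g - expect N S Nz h"
proof -
  have "(\<Sum>Z\<in>assignments N S Nz. f Z + g Z - h Z)
     = (\<Sum>Z\<in>assignments N S Nz. f Z) + (\<Sum>Z\<in>assignments N S Nz. g Z) - (\<Sum>Z\<in>assignments N S Nz. h Z)"
    by (simp only: sum_subtractf sum.distrib)
  then show ?thesis unfolding expect_def by (simp only: diff_divide_distrib add_divide_distrib)
qed

theorem propositionS3:
  fixes N T k t :: nat and S :: "trt list set" and Nz :: "trt list \<Rightarrow> nat" and z' :: "trt list"
  assumes S_sub: "S \<subseteq> seqs T" and S_ne: "S \<noteq> {}"
    and Nz_pos: "\<forall>z\<in>S. Nz z > 0" and Nz_sum: "(\<Sum>z\<in>S. Nz z) = N"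
    and k_pos: "1 \<le> k" and kT: "k < T"
    and z': "z' \<in> seqs T" and t: "1 \<le> t" "t \<le> T"
    and cond: "((t \<le> k \<and> (\<exists>z\<in>S. agree z z' 1 t))
               \<or> (k < t \<and> (\<exists>z\<in>S. agree z z' (t - k + 1) t)))
             \<or> (k \<le> t \<and> (\<exists>t'. k \<le> t' \<and> t' \<le> T \<and> t' \<noteq> t \<and>
                 (\<exists>z1\<in>seqs T. \<exists>z2\<in>seqs T. \<exists>z3\<in>seqs T.
                    win k z1 t' = win k z' t \<and> win k z2 t = win k z3 t' \<and>
                    estimable N T k S Nz (\<lambda>Y. Ybar N Y t' z1) \<and>
                    estimable N T k S Nz (\<lambda>Y. Ybar N Y t z2) \<and>
                    estimable N T k S Nz (\<lambda>Y. Ybar N Y t' z3))))"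
  shows "estimable N T k S Nz (\<lambda>Y. Ybar N Y t z')"
proof -
  have fin: "finite S" using S_sub finite_seqs by (rule finite_subset)
  have tT: "t \<in> {1..T}" using t by simp
  show ?thesis
  proof (cases "(t \<le> k \<and> (\<exists>z\<in>S. agree z z' 1 t))
               \<or> (k < t \<and> (\<exists>z\<in>S. agree z z' (t - k + 1) t))")
    case True
    then obtain z0 where z0: "z0 \<in> S" and ag: "(t \<le> k \<and> agree z0 z' 1 t) \<or> (k < t \<and> agree z0 z' (t - k + 1) t)"
      by blast
    have z0s: "z0 \<in> seqs T" using z0 S_sub by auto
    have eqY: "Ybar N Y t z0 = Ybar N Y t z'" if v: "valid_pop N T k Y" for Y
    proof -
      have "Y i t z0 = Y i t z'" if i: "i < N" for i
        using ag
      proof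
        assume "t \<le> k \<and> agree z0 z' 1 t"
        then show ?thesis using v i tT z0s z' unfolding valid_pop_def assump1_def by blast
      next
        assume h: "k < t \<and> agree z0 z' (t - k + 1) t"
        then have "max 1 (t + 1 - k) = t - k + 1" by simp
        then have "agree z0 z' (max 1 (t + 1 - k)) t" using h by simp
        then show ?thesis using v i tT z0s z' unfolding valid_pop_def assump2_def by blast
      qed
      then show ?thesis unfolding Ybar_def by simp
    qed
    have p0: "Nz z0 > 0" using Nz_pos z0 by blast
    show ?thesis unfolding estimable_def
    proof (intro exI[of _ "\<lambda>s z. if s = t \<and> z = z0 then 1 else 0"] allI impI)
      fix Y assume "valid_pop N T k Y"
      then show "expect N S Nz (\<lambda>Z. \<Sum>s\<in>{1..T}. \<Sum>z\<in>S.
            (if s = t \<and> z = z0 then 1 else 0) * Yhat N Nz Y Z s z) = Ybar N Y t z'"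
        using est_direct[OF fin Nz_sum z0 p0 tT, rule_format, of Y] eqY by simp
    qed
  next
    case False
    with cond obtain t' z1 z2 z3 where tk: "k \<le> t" and t': "k \<le> t'" "t' \<le> T" "t' \<noteq> t"
      and zs: "z1 \<in> seqs T" "z2 \<in> seqs T" "z3 \<in> seqs T"
      and w1: "win k z1 t' = win k z' t" and w2: "win k z2 t = win k z3 t'"
      and e1: "estimable N T k S Nz (\<lambda>Y. Ybar N Y t' z1)"
      and e2: "estimable N T k S Nz (\<lambda>Y. Ybar N Y t z2)"
      and e3: "estimable N T k S Nz (\<lambda>Y. Ybar N Y t' z3)" by blast
    obtain v1 where v1: "\<forall>Y. valid_pop N T k Y \<longrightarrow>
       expect N S Nz (\<lambda>Z. \<Sum>s\<in>{1..T}. \<Sum>z\<in>S. v1 s z * Yhat N Nz Y Z s z) = Ybar N Y t' z1"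
      using e1 unfolding estimable_def by blast
    obtain v2 where v2: "\<forall>Y. valid_pop N T k Y \<longrightarrow>
       expect N S Nz (\<lambda>Z. \<Sum>s\<in>{1..T}. \<Sum>z\<in>S. v2 s z * Yhat N Nz Y Z s z) = Ybar N Y t z2"
      using e2 unfolding estimable_def by blast
    obtain v3 where v3: "\<forall>Y. valid_pop N T k Y \<longrightarrow>
       expect N S Nz (\<lambda>Z. \<Sum>s\<in>{1..T}. \<Sum>z\<in>S. v3 s z * Yhat N Nz Y Z s z) = Ybar N Y t' z3"
      using e3 unfolding estimable_def by blast
    have key: "Ybar N Y t z' = Ybar N Y t' z1 + Ybar N Y t z2 - Ybar N Y t' z3"
      if v: "valid_pop N T k Y" for Y
    proof -
      have a3: "assump3 N T k Y" using v by (simp add: valid_pop_def)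
      have lw: "length (win k z s) = k" if "z \<in> seqs T" "k \<le> s" "s \<le> T" for z s
        using that by (simp add: win_def seqs_def)
      have A3: "\<And>a b tt tt' i x1 x2 x3 x4. length a = k \<Longrightarrow> length b = k \<Longrightarrow> k \<le> tt \<Longrightarrow>
          tt < tt' \<Longrightarrow> tt' \<le> T \<Longrightarrow> i < N \<Longrightarrow> x1 \<in> seqs T \<Longrightarrow> x2 \<in> seqs T \<Longrightarrow>
          x3 \<in> seqs T \<Longrightarrow> x4 \<in> seqs T \<Longrightarrow> win k x1 tt = a \<Longrightarrow> win k x2 tt = b \<Longrightarrow>
          win k x3 tt' = a \<Longrightarrow> win k x4 tt' = b \<Longrightarrow>
          Y i tt x1 - Y i tt x2 = Y i tt' x3 - Y i tt' x4"
        using a3 unfolding assump3_def by blast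
      have "Y i t z' = Y i t' z1 + Y i t z2 - Y i t' z3" if i: "i < N" for i
      proof (cases "t < t'")
        case True
        have "Y i t z' - Y i t z2 = Y i t' z1 - Y i t' z3"
          by (rule A3[OF lw[OF z' tk t(2)] lw[OF zs(2) tk t(2)] tk True t'(2) i z' zs(2) zs(1) zs(3)
                refl refl w1 w2[symmetric]])
        then show ?thesis by simp
      next
        case False
        then have tt: "t' < t" using t' by simp
        have "Y i t' z1 - Y i t' z3 = Y i t z' - Y i t z2"
          by (rule A3[OF lw[OF zs(1) t'(1) t'(2)] lw[OF zs(3) t'(1) t'(2)] t'(1) tt t(2) i zs(1) zs(3) z' zs(2)
                refl refl w1[symmetric] w2])
        then show ?thesis by simp
      qed
      then show ?thesis unfolding Ybar_def
        by (simp add: sum.distrib sum_subtractf diff_divide_distrib add_divide_distrib)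
    qed
    show ?thesis unfolding estimable_def
    proof (intro exI[of _ "\<lambda>s z. v1 s z + v2 s z - v3 s z"] allI impI)
      fix Y assume v: "valid_pop N T k Y"
      have eq: "(\<lambda>Z. \<Sum>s\<in>{1..T}. \<Sum>z\<in>S. (v1 s z + v2 s z - v3 s z) * Yhat N Nz Y Z s z)
        = (\<lambda>Z. (\<Sum>s\<in>{1..T}. \<Sum>z\<in>S. v1 s z * Yhat N Nz Y Z s z)
             + (\<Sum>s\<in>{1..T}. \<Sum>z\<in>S. v2 s z * Yhat N Nz Y Z s z)
             - (\<Sum>s\<in>{1..T}. \<Sum>z\<in>S. v3 s z * Yhat N Nz Y Z s z))"
        by (simp add: ring_distribs sum.distrib sum_subtractf)
      show "expect N S Nz (\<lambda>Z. \<Sum>s\<in>{1..T}. \<Sum>z\<in>S. (v1 s z + v2 s z - v3 s z) * Yhat N Nz Y Z s z)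
          = Ybar N Y t z'"
        unfolding eq expect_lin using v v1 v2 v3 key[OF v] by simp
    qed
  qed
qed

end
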